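(* Let $A$ be an infinite set, $\mathcal{L}\in V(\Omega(A))$, and $I,J,K$ sets. If $f:A^{I}\to A^{J}$ and $g:A^{J}\to A^{K}$ are uniformly continuous, then $\overline{g}^{\mathcal{L}}\circ\overline{f}^{\mathcal{L}}=\overline{g\circ f}^{\mathcal{L}}$ as maps $\mathcal{L}^{I}\to\mathcal{L}^{K}$.
   Context: For each $a\in A$ let $\hat{a}$ be a constant symbol, and for each $n\geq1$ and each $h:A^{n}\to A$ let $\hat{h}$ be an $n$-ary operation symbol. $\Omega(A)$ is the algebra with universe $A$ interpreting $\hat{a}$ as $a$ and $\hat{h}$ as $h$; $V(\Omega(A))$ is the variety it generates. Partitions: for $h:X\to Y$, $\Pi(h)$ is the partition of $X$ into nonempty fibers, and for a partition $P$ of $Y$, $[h]_{-1}(P)=\{h^{-1}(R):R\in P\}\setminus\{\emptyset\}$. For $i_{1},\dots,i_{n}\in I$, $\mathcal{P}_{i_{1},\dots,i_{n}}$ is the partition of $A^{I}$ with $u,v$ in the same block iff $u(i_{k})=v(i_{k})$ for all $k$; $\mathcal{P}(A,I)$ is the filter of partitions of $A^{I}$ coarser than some $\mathcal{P}_{i_{1},\dots,i_{n}}$. $\mathbf{F}(A,I)=\{h\in A^{A^{I}}:\Pi(h)\in\mathcal{P}(A,I)\}$, a subalgebra of $\Omega(A)^{A^{I}}$, freely generated in $V(\Omega(A))$ by the projections $\pi_{i}(u)=u(i)$; every $h\in\mathbf{F}(A,I)$ can be written $h=\hat{r}^{\mathbf{F}(A,I)}(\pi_{i_{1}},\dots,\pi_{i_{n}})$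 for some $r:A^{n}\to A$ and $i_{1},\dots,i_{n}\in I$. Uniform continuity: $h:X\to Y$ with $X,Y$ carrying filters of partitions $F,G$ is uniformly continuous if $[h]_{-1}(P)\in F$ for all $P\in G$; $A^{I}$ carries $\mathcal{P}(A,I)$ and $A$ carries all partitions of $A$ (so uniformly continuous maps $A^{I}\to A$ are exactly the elements of $\mathbf{F}(A,I)$). For $h=\hat{r}^{\mathbf{F}(A,I)}(\pi_{i_{1}},\dots,\pi_{i_{n}})\in\mathbf{F}(A,I)$, define $\overline{h}^{\mathcal{L}}:\mathcal{L}^{I}\to\mathcal{L}$ by $\overline{h}^{\mathcal{L}}((\ell_{i})_{i\in I})=\hat{r}^{\mathcal{L}}(\ell_{i_{1}},\dots,\ell_{i_{n}})$ (this is well defined). For uniformly continuous $f:A^{I}\to A^{J}$, define $\overline{f}^{\mathcal{L}}:\mathcal{L}^{I}\to\mathcal{L}^{J}$ by $\overline{f}^{\mathcal{L}}(\alpha)=(\overline{\pi_{j}\circ f}^{\mathcal{L}}(\alpha))_{j\in J}$. *)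

theory Defs
  imports "HOL-Library.Disjoint_Sets" "HOL-Library.FuncSet"
begin

text \<open>The base set A is the universe of the type 'a.  An operation symbol of Omega(A) is
  encoded by a function h :: 'a list => 'a together with an arity n (the length of the
  argument list it is applied to): it denotes the operation h restricted to lists of
  length n, i.e. a map A^n -> A.  Arity 0 gives the constant symbols (the constant for
  a is represented by any h with h [] = a).  An Omega(A)-algebra with universe the type
  'l is given by its interpretation ops :: ('a list => 'a) => 'l list => 'l, where
  ops h xs interprets the symbol (length xs, h) applied to xs.\<close>

datatype 'a trm = Var nat | Op "'a list \<Rightarrow> 'a" "'a trm list"

fun eval :: "(('a list \<Rightarrow> 'a) \<Rightarrow> 'l list \<Rightarrow> 'l) \<Rightarrow> (nat \<Rightarrow> 'l) \<Rightarrow> 'a trm \<Rightarrow> 'l" where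
  "eval ops \<rho> (Var n) = \<rho> n"
| "eval ops \<rho> (Op h ts) = ops h (map (eval ops \<rho>) ts)"

definition Omega_ops :: "('a list \<Rightarrow> 'a) \<Rightarrow> 'a list \<Rightarrow> 'a" where
  "Omega_ops h xs = h xs"

text \<open>V(Omega(A)): the variety generated by Omega(A), i.e. the class of algebras
  satisfying every identity that holds in Omega(A).\<close>
definition in_variety :: "(('a list \<Rightarrow> 'a) \<Rightarrow> 'l list \<Rightarrow> 'l) \<Rightarrow> bool" where
  "in_variety ops \<longleftrightarrow>
     (\<forall>s t. (\<forall>\<rho>::nat \<Rightarrow> 'a. eval Omega_ops \<rho> s = eval Omega_ops \<rho> t)
        \<longrightarrow> (\<forall>\<rho>::nat \<Rightarrow> 'l. eval ops \<rho> s = eval ops \<rho> t))"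

definition cube :: "'i set \<Rightarrow> ('i \<Rightarrow> 'a) set" where
  "cube I = PiE I (\<lambda>_. UNIV)"

definition agree_part :: "'i set \<Rightarrow> 'i set \<Rightarrow> ('i \<Rightarrow> 'a) set set" where
  "agree_part I S = {{v \<in> cube I. \<forall>i\<in>S. v i = u i} | u. u \<in> cube I}"

definition coarser :: "'b set set \<Rightarrow> 'b set set \<Rightarrow> bool" where
  "coarser Q P \<longleftrightarrow> (\<forall>B\<in>P. \<exists>C\<in>Q. B \<subseteq> C)"

definition PAI :: "'i set \<Rightarrow> ('i \<Rightarrow> 'a) set set set" where
  "PAI I = {Q. partition_on (cube I) Q \<and>
     (\<exists>S. finite S \<and> S \<subseteq> I \<and> coarser Q (agree_part I S))}"

definition preimage_part :: "'b set \<Rightarrow> ('b \<Rightarrow> 'c) \<Rightarrow> 'c set set \<Rightarrow> 'b set set" where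
  "preimage_part X h P = {h -` R \<inter> X | R. R \<in> P} - {{}}"

definition unif_cont :: "'i set \<Rightarrow> 'j set \<Rightarrow> (('i \<Rightarrow> 'a) \<Rightarrow> ('j \<Rightarrow> 'a)) \<Rightarrow> bool" where
  "unif_cont I J f \<longleftrightarrow> f \<in> cube I \<rightarrow> cube J \<and>
     (\<forall>P \<in> PAI J. preimage_part (cube I) f P \<in> PAI I)"

text \<open>For h in F(A,I), h = r^(pi_{i_1},...,pi_{i_n}); then
  bar h (l_i) = r^L(l_{i_1},...,l_{i_n}).  The representation (r, [i_1..i_n]) is chosen by
  Hilbert choice (the value does not depend on the choice for L in the variety).\<close>
definition bar_fun :: "(('a list \<Rightarrow> 'a) \<Rightarrow> 'l list \<Rightarrow> 'l) \<Rightarrow> 'i set \<Rightarrow> (('i \<Rightarrow> 'a) \<Rightarrow> 'a)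
    \<Rightarrow> ('i \<Rightarrow> 'l) \<Rightarrow> 'l" where
  "bar_fun ops I h lv =
     (let (r, ks) = (SOME (r, ks). set ks \<subseteq> I \<and> (\<forall>u\<in>cube I. h u = r (map u ks)))
      in ops r (map lv ks))"

definition bar_map :: "(('a list \<Rightarrow> 'a) \<Rightarrow> 'l list \<Rightarrow> 'l) \<Rightarrow> 'i set \<Rightarrow> 'j set
    \<Rightarrow> (('i \<Rightarrow> 'a) \<Rightarrow> ('j \<Rightarrow> 'a)) \<Rightarrow> ('i \<Rightarrow> 'l) \<Rightarrow> ('j \<Rightarrow> 'l)" where
  "bar_map ops I J f \<alpha> = restrict (\<lambda>j. bar_fun ops I (\<lambda>u. f u j) \<alpha>) J"

end

theory Submission
  imports Defs
begin

fun tvars :: "'a trm \<Rightarrow> nat set" where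
  "tvars (Var n) = {n}"
| "tvars (Op h ts) = \<Union>(tvars ` set ts)"

lemma eval_cong: "(\<forall>n\<in>tvars t. \<rho> n = \<rho>' n) \<Longrightarrow> eval ops \<rho> t = eval ops \<rho>' t"
proof (induction t)
  case (Var x)
  then show ?case by simp
next
  case (Op h ts)
  then show ?case by (auto intro!: arg_cong[where f="ops h"] map_cong)
qed

lemma transfer:
  assumes var: "in_variety ops" and inj: "inj_on e S" and SI: "S \<subseteq> I"
    and vs: "tvars s \<subseteq> e ` S" and vt: "tvars t \<subseteq> e ` S"
    and hyp: "\<forall>u\<in>cube I. eval Omega_ops (\<lambda>n. u (inv_into S e n)) s
                          = eval Omega_ops (\<lambda>n. u (inv_into S e n)) t"
  shows "eval ops (\<lambda>n. lv (inv_into S e n)) s = eval ops (\<lambda>n. lv (inv_into S e n)) t"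
proof -
  have "\<forall>\<rho>::nat \<Rightarrow> 'a. eval Omega_ops \<rho> s = eval Omega_ops \<rho> t"
  proof
    fix \<rho> :: "nat \<Rightarrow> 'a"
    define u where "u = (\<lambda>i. if i \<in> I then \<rho> (e i) else undefined)"
    have u: "u \<in> cube I" unfolding cube_def u_def by auto
    have agr: "\<forall>n\<in>e ` S. u (inv_into S e n) = \<rho> n"
      using inj SI by (auto simp: u_def inv_into_f_f)
    have "eval Omega_ops \<rho> s = eval Omega_ops (\<lambda>n. u (inv_into S e n)) s"
      using agr vs by (intro eval_cong) auto
    also have "\<dots> = eval Omega_ops (\<lambda>n. u (inv_into S e n)) t" using hyp u by blast
    also have "\<dots> = eval Omega_ops \<rho> t"
      using agr vt by (intro eval_cong) auto
    finally show "eval Omega_ops \<rho> s = eval Omega_ops \<rho> t" .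
  qed
  then show ?thesis using var unfolding in_variety_def by blast
qed

lemma inj_exists: "finite (S::'x set) \<Longrightarrow> \<exists>e::'x \<Rightarrow> nat. inj_on e S"
  using finite_imp_inj_to_nat_seg by blast

lemma eval_var_e:
  assumes "inj_on e S" "set ks \<subseteq> S"
  shows "map (eval X (\<lambda>n. w (inv_into S e n))) (map (\<lambda>i. Var (e i)) ks) = map w ks"
    "map (eval X (\<lambda>n. w (inv_into S e n)) \<circ> (\<lambda>i. Var (e i))) ks = map w ks"
  using assms by (auto simp: inv_into_f_f)

lemma rep_bar:
  assumes var: "in_variety ops" and ks: "set ks \<subseteq> I"
    and rep: "\<forall>u\<in>cube I. h u = r (map u ks)"
  shows "bar_fun ops I h lv = ops r (map lv ks)"
proof -
  let ?P = "\<lambda>(r, ks). set ks \<subseteq> I \<and> (\<forall>u\<in>cube I. h u = r (map u ks))"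
  have ex: "?P (r, ks)" using ks rep by simp
  obtain r0 ks0 where e0: "(SOME x. ?P x) = (r0, ks0)" by (cases "SOME x. ?P x") auto
  have P0: "?P (r0, ks0)" using someI[of ?P, OF ex] e0 by simp
  have bf: "bar_fun ops I h lv = ops r0 (map lv ks0)"
    unfolding bar_fun_def e0 by simp
  define S where "S = set ks0 \<union> set ks"
  obtain e :: "_ \<Rightarrow> nat" where inj: "inj_on e S" using inj_exists[of S] S_def by auto
  have SI: "S \<subseteq> I" using P0 ks S_def by auto
  let ?s = "Op r0 (map (\<lambda>i. Var (e i)) ks0)"
  let ?t = "Op r (map (\<lambda>i. Var (e i)) ks)"
  have k0: "set ks0 \<subseteq> S" and k1: "set ks \<subseteq> S" by (auto simp: S_def)
  have "eval ops (\<lambda>n. lv (inv_into S e n)) ?s = eval ops (\<lambda>n. lv (inv_into S e n)) ?t"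
  proof (rule transfer[OF var inj SI])
    show "tvars ?s \<subseteq> e ` S" "tvars ?t \<subseteq> e ` S" using k0 k1 by auto
    show "\<forall>u\<in>cube I. eval Omega_ops (\<lambda>n. u (inv_into S e n)) ?s =
                      eval Omega_ops (\<lambda>n. u (inv_into S e n)) ?t"
      unfolding eval.simps(2) eval_var_e(1)[OF inj k0] eval_var_e(1)[OF inj k1] Omega_ops_def
      using P0 rep by simp
  qed
  then show ?thesis unfolding bf eval.simps(2) eval_var_e(1)[OF inj k0] eval_var_e(1)[OF inj k1] .
qed

lemma rep_from_local:
  fixes h :: "('i \<Rightarrow> 'a) \<Rightarrow> 'c" and I :: "'i set"
  assumes S: "finite S" "S \<subseteq> I"
    and loc: "\<forall>u\<in>(cube I :: ('i \<Rightarrow> 'a) set). \<forall>v\<in>cube I. (\<forall>i\<in>S. u i = v i) \<longrightarrow> h u = h v"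
  shows "\<exists>r ks. set ks \<subseteq> I \<and> (\<forall>u\<in>(cube I :: ('i \<Rightarrow> 'a) set). h u = r (map u ks))"
proof -
  obtain ks where ks: "set ks = S" using finite_list[OF S(1)] by blast
  define r where "r xs = h (\<lambda>i. if i \<in> I then (case map_of (zip ks xs) i of Some a \<Rightarrow> a | None \<Rightarrow> undefined) else undefined)" for xs
  have "\<forall>u\<in>(cube I :: ('i \<Rightarrow> 'a) set). h u = r (map u ks)"
  proof
    fix u :: "'i \<Rightarrow> 'a" assume u: "u \<in> cube I"
    let ?v = "\<lambda>i. if i \<in> I then (case map_of (zip ks (map u ks)) i of Some a \<Rightarrow> a | None \<Rightarrow> undefined) else undefined"
    have v: "?v \<in> cube I" by (auto simp: cube_def)
    have "\<forall>i\<in>S. u i = ?v i" using ks S(2) by (auto simp: map_of_zip_map)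
    moreover have "(\<forall>i\<in>S. u i = ?v i) \<longrightarrow> h u = h ?v" using bspec[OF bspec[OF loc u] v] .
    ultimately have "h u = h ?v" by (rule rev_mp)
    then show "h u = r (map u ks)" by (simp add: r_def)
  qed
  then show ?thesis using ks S by blast
qed

lemma rep_exists:
  fixes f :: "('i \<Rightarrow> 'a) \<Rightarrow> ('j \<Rightarrow> 'a)"
  assumes uc: "unif_cont I J f" and j: "j \<in> J"
  shows "\<exists>r ks. set ks \<subseteq> I \<and> (\<forall>u\<in>cube I. f u j = r (map u ks))"
proof -
  define P :: "('j \<Rightarrow> 'a) set set" where "P = {{v \<in> cube J. v j = a} | a. True} - {{}}"
  have part: "partition_on (cube J) P"
    unfolding partition_on_def disjoint_def P_def by auto
  have coar: "coarser P (agree_part J {j})"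
    unfolding coarser_def agree_part_def P_def
  proof clarify
    fix u assume u: "u \<in> cube J"
    show "\<exists>C\<in>{{v \<in> cube J. v j = a} |a. True} - {{}}. {v \<in> cube J. \<forall>i\<in>{j}. v i = u i} \<subseteq> C"
      by (rule bexI[where x="{v \<in> cube J. v j = u j}"]) (use u in auto)
  qed
  have "P \<in> PAI J" unfolding PAI_def using part coar j by (intro CollectI conjI exI[of _ "{j}"]) auto
  then have "preimage_part (cube I) f P \<in> PAI I" using uc unfolding unif_cont_def by blast
  then obtain S where S: "finite S" "S \<subseteq> I" "coarser (preimage_part (cube I) f P) (agree_part I S)"
    unfolding PAI_def by blast
  have loc: "\<forall>u\<in>cube I. \<forall>v\<in>cube I. (\<forall>i\<in>S. u i = v i) \<longrightarrow> f u j = f v j"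
  proof (intro ballI impI)
    fix u v :: "'i \<Rightarrow> 'a" assume u: "u \<in> cube I" and v: "v \<in> cube I" and ag: "\<forall>i\<in>S. u i = v i"
    have "{w \<in> (cube I :: ('i \<Rightarrow> 'a) set). \<forall>i\<in>S. w i = u i} \<in> agree_part I S" unfolding agree_part_def using u by blast
    then obtain C where C: "C \<in> preimage_part (cube I) f P" "{w \<in> (cube I :: ('i \<Rightarrow> 'a) set). \<forall>i\<in>S. w i = u i} \<subseteq> C"
      using S(3) unfolding coarser_def by blast
    then obtain R where R: "R \<in> P" "C = f -` R \<inter> cube I" unfolding preimage_part_def by blast
    then obtain a where a: "R = {w \<in> cube J. w j = a}" unfolding P_def by blast
    have "u \<in> C" "v \<in> C" using C(2) u v ag by auto
    then show "f u j = f v j" using R(2) a by auto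
  qed
  show ?thesis by (rule rep_from_local[OF S(1,2) loc])
qed

theorem mainTheorem6:
  fixes ops :: "('a list \<Rightarrow> 'a) \<Rightarrow> 'l list \<Rightarrow> 'l"
    and I :: "'i set" and J :: "'j set" and K :: "'k set"
    and f :: "('i \<Rightarrow> 'a) \<Rightarrow> ('j \<Rightarrow> 'a)" and g :: "('j \<Rightarrow> 'a) \<Rightarrow> ('k \<Rightarrow> 'a)"
  assumes "infinite (UNIV :: 'a set)"
    and "in_variety ops"
    and "unif_cont I J f"
    and "unif_cont J K g"
  shows "\<forall>\<alpha> \<in> PiE I (\<lambda>_. UNIV :: 'l set).
           bar_map ops J K g (bar_map ops I J f \<alpha>) = bar_map ops I K (g \<circ> f) \<alpha>"
proof
  fix \<alpha> :: "'i \<Rightarrow> 'l"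
  have var: "in_variety ops" by fact
  have fcube: "\<forall>u\<in>cube I. f u \<in> cube J" using assms(3) unfolding unif_cont_def by blast
  have "\<forall>j\<in>J. \<exists>rk. set (snd rk) \<subseteq> I \<and> (\<forall>u\<in>cube I. f u j = fst rk (map u (snd rk)))"
    using rep_exists[OF assms(3)] by fastforce
  then obtain RK where RK: "\<forall>j\<in>J. set (snd (RK j)) \<subseteq> I \<and> (\<forall>u\<in>cube I. f u j = fst (RK j) (map u (snd (RK j))))"
    by metis
  define R where "R j = fst (RK j)" for j
  define KS where "KS j = snd (RK j)" for j
  have RKS: "\<And>j. j \<in> J \<Longrightarrow> set (KS j) \<subseteq> I \<and> (\<forall>u\<in>cube I. f u j = R j (map u (KS j)))"
    using RK R_def KS_def by auto
  have beta: "\<And>j. j \<in> J \<Longrightarrow> bar_map ops I J f \<alpha> j = ops (R j) (map \<alpha> (KS j))"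
    unfolding bar_map_def proof -
    fix j assume j: "j \<in> J"
    show "restrict (\<lambda>j. bar_fun ops I (\<lambda>u. f u j) \<alpha>) J j = ops (R j) (map \<alpha> (KS j))"
      using j rep_bar[OF var, of "KS j" I "\<lambda>u. f u j" "R j"] RKS[OF j] by simp
  qed
  show "bar_map ops J K g (bar_map ops I J f \<alpha>) = bar_map ops I K (g \<circ> f) \<alpha>"
  proof
    fix k
    show "bar_map ops J K g (bar_map ops I J f \<alpha>) k = bar_map ops I K (g \<circ> f) \<alpha> k"
    proof (cases "k \<in> K")
      case False then show ?thesis by (simp add: bar_map_def)
    next
      case True
      obtain s js where sjs: "set js \<subseteq> J" "\<forall>v\<in>cube J. g v k = s (map v js)"
        using rep_exists[OF assms(4) True] by blast
      have L: "bar_map ops J K g (bar_map ops I J f \<alpha>) k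
              = ops s (map (\<lambda>j. ops (R j) (map \<alpha> (KS j))) js)"
        using True rep_bar[OF var sjs(1,2)] beta sjs(1)
        by (auto simp: bar_map_def subset_iff intro!: arg_cong[where f="ops s"])
      define S0 where "S0 = (\<Union>j\<in>set js. set (KS j))"
      have S0: "finite S0" "S0 \<subseteq> I" using RKS sjs(1) by (auto simp: S0_def)
      have comp: "\<forall>u\<in>cube I. g (f u) k = s (map (\<lambda>j. R j (map u (KS j))) js)"
        using sjs fcube RKS subsetD[OF sjs(1)] by (auto intro!: arg_cong[where f=s])
      have loc: "\<forall>u\<in>cube I. \<forall>v\<in>cube I. (\<forall>i\<in>S0. u i = v i) \<longrightarrow> g (f u) k = g (f v) k"
      proof (intro ballI impI)
        fix u v :: "'i \<Rightarrow> 'a" assume u: "u \<in> cube I" and v: "v \<in> cube I" and ag: "\<forall>i\<in>S0. u i = v i"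
        have "map (\<lambda>j. R j (map u (KS j))) js = map (\<lambda>j. R j (map v (KS j))) js"
          using ag by (auto simp: S0_def intro!: arg_cong[where f="R _"])
        then show "g (f u) k = g (f v) k" using comp u v by metis
      qed
      let ?P = "\<lambda>(r, ks). set ks \<subseteq> I \<and> (\<forall>u\<in>cube I. (\<lambda>u. (g \<circ> f) u k) u = r (map u ks))"
      obtain t0 ks0 where ex: "set ks0 \<subseteq> I" "\<forall>u\<in>cube I. (\<lambda>u. (g \<circ> f) u k) u = t0 (map u ks0)"
        using rep_from_local[OF S0 loc] by auto
      have Rt: "bar_map ops I K (g \<circ> f) \<alpha> k = ops t0 (map \<alpha> ks0)"
        using True rep_bar[OF var ex] by (simp add: bar_map_def)
      define S where "S = set ks0 \<union> S0"
      obtain e :: "'i \<Rightarrow> nat" where inj: "inj_on e S" using inj_exists[of S] S_def S0 by auto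
      have SI: "S \<subseteq> I" using ex S0 S_def by auto
      have k0: "set ks0 \<subseteq> S" by (auto simp: S_def)
      have kj: "\<And>j. j \<in> set js \<Longrightarrow> set (KS j) \<subseteq> S" by (auto simp: S_def S0_def)
      let ?t = "Op t0 (map (\<lambda>i. Var (e i)) ks0)"
      let ?s = "Op s (map (\<lambda>j. Op (R j) (map (\<lambda>i. Var (e i)) (KS j))) js)"
      have evs: "\<And>X w. eval X (\<lambda>n. w (inv_into S e n)) ?s = X s (map (\<lambda>j. X (R j) (map w (KS j))) js)"
      proof -
        have inS: "\<And>j x. j \<in> set js \<Longrightarrow> x \<in> set (KS j) \<Longrightarrow> inv_into S e (e x) = x"
          using kj inj by (meson inv_into_f_f subsetD)
        show "\<And>X w. eval X (\<lambda>n. w (inv_into S e n)) ?s = X s (map (\<lambda>j. X (R j) (map w (KS j))) js)"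
          by (simp add: inS cong: map_cong)
      qed
      have "eval ops (\<lambda>n. \<alpha> (inv_into S e n)) ?s = eval ops (\<lambda>n. \<alpha> (inv_into S e n)) ?t"
      proof (rule transfer[OF var inj SI])
        show "tvars ?s \<subseteq> e ` S" using kj by fastforce
        show "tvars ?t \<subseteq> e ` S" using k0 by auto
        show "\<forall>u\<in>cube I. eval Omega_ops (\<lambda>n. u (inv_into S e n)) ?s =
                      eval Omega_ops (\<lambda>n. u (inv_into S e n)) ?t"
          unfolding evs unfolding eval.simps(2) eval_var_e(1)[OF inj k0] Omega_ops_def
        using comp ex(2) by simp
      qed
      then show ?thesis unfolding L Rt evs unfolding eval.simps(2) eval_var_e(1)[OF inj k0] .
    qed
  qed
qed

end
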